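(* Under the standing setting and assumptions (A1)–(A3) described in the context, assume $\mathrm{int}\,\mathcal X_+\cap\mathcal M\neq\emptyset$. Then for every $\varepsilon>0$ the map $\mathcal R_\varepsilon$ is lower semicontinuous at every point of $\mathcal X$.
   Context: Let $\mathcal X$ be a Hausdorff, first countable, locally convex topological vector space over $\mathbb R$, partially ordered by a partial order $\geq$ with positive cone $\mathcal X_+=\{X\in\mathcal X: X\geq 0\}$. Let $\mathcal M\subset\mathcal X$ be a vector subspace with $1<\dim\mathcal M<\infty$, carrying the relative topology, and let $\pi:\mathcal M\to\mathbb R$ be linear. Standing assumptions: (A1) there is $U\in\mathcal M\cap\mathcal X_+$ with $\pi(U)=1$; (A2) $\mathcal A\subsetneq\mathcal X$ is closed, contains $0$, and satisfies $\mathcal A+\mathcal X_+\subset\mathcal A$; (A3) the map $\rho(X)=\inf\{\pi(Z): Z\in\mathcal M,\ X+Z\in\mathcal A\}$ is finitely valued and continuous on $\mathcal X$. For $\varepsilon>0$, $\mathcal R_\varepsilon(X)=\{Z\in\mathcal M: X+Z\in\mathcal A,\ \pi(Z)<\rho(X)+\varepsilon\}$. $\mathrm{int}$ denotes interior in $\mathcal X$. A set-valued map $\mathcal S:\mathcal X\rightrightarrows\mathcal M$ is lower semicontinuous at $X$ if for every open $\mathcal U\subset\mathcal M$ with $\mathcal S(X)\cap\mathcal U\neq\emptyset$ there is an open neighborhood $\mathcal U_X$ of $X$ with $\mathcal S(Y)\cap\mathcal U\neq\emptyset$ for all $Y\in\mathcal U_X$. *)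

theory Defs
  imports "HOL-Analysis.Analysis"
begin

definition tvs_axioms :: "('a::{real_vector,topological_space}) itself \<Rightarrow> bool" where
  "tvs_axioms _ \<longleftrightarrow>
     continuous_on UNIV (\<lambda>p::'a \<times> 'a. fst p + snd p) \<and>
     continuous_on UNIV (\<lambda>p::real \<times> 'a. fst p *\<^sub>R snd p)"

definition locally_convex :: "('a::{real_vector,topological_space}) itself \<Rightarrow> bool" where
  "locally_convex _ \<longleftrightarrow>
     (\<forall>W::'a set. open W \<and> 0 \<in> W \<longrightarrow> (\<exists>C. open C \<and> convex C \<and> 0 \<in> C \<and> C \<subseteq> W))"

definition pos_cone :: "'a::ordered_real_vector set" where
  "pos_cone = {X. X \<ge> 0}"

definition linear_on_sub :: "'a::real_vector set \<Rightarrow> ('a \<Rightarrow> real) \<Rightarrow> bool" where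
  "linear_on_sub M \<pi> \<longleftrightarrow>
     (\<forall>x\<in>M. \<forall>y\<in>M. \<pi> (x + y) = \<pi> x + \<pi> y) \<and>
     (\<forall>c. \<forall>x\<in>M. \<pi> (c *\<^sub>R x) = c * \<pi> x)"

definition adm_prices :: "'a::real_vector set \<Rightarrow> 'a set \<Rightarrow> ('a \<Rightarrow> real) \<Rightarrow> 'a \<Rightarrow> real set" where
  "adm_prices A M \<pi> X = {\<pi> Z | Z. Z \<in> M \<and> X + Z \<in> A}"

definition rho :: "'a::real_vector set \<Rightarrow> 'a set \<Rightarrow> ('a \<Rightarrow> real) \<Rightarrow> 'a \<Rightarrow> real" where
  "rho A M \<pi> X = Inf (adm_prices A M \<pi> X)"

definition Reps :: "'a::real_vector set \<Rightarrow> 'a set \<Rightarrow> ('a \<Rightarrow> real) \<Rightarrow> real \<Rightarrow> 'a \<Rightarrow> 'a set" where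
  "Reps A M \<pi> \<epsilon> X = {Z \<in> M. X + Z \<in> A \<and> \<pi> Z < rho A M \<pi> X + \<epsilon>}"

definition lsc_at :: "'a::topological_space set \<Rightarrow> ('a \<Rightarrow> 'a set) \<Rightarrow> 'a \<Rightarrow> bool" where
  "lsc_at M S X \<longleftrightarrow>
     (\<forall>U. openin (top_of_set M) U \<and> S X \<inter> U \<noteq> {} \<longrightarrow>
        (\<exists>V. open V \<and> X \<in> V \<and> (\<forall>Y\<in>V. S Y \<inter> U \<noteq> {})))"

end

theory Submission
  imports Defs
begin

lemma tvs_add_cont:
  fixes f g :: "'b::topological_space \<Rightarrow> 'a::{real_vector,topological_space}"
  assumes "tvs_axioms TYPE('a)" "continuous_on S f" "continuous_on S g"
  shows "continuous_on S (\<lambda>x. f x + g x)"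
proof -
  have c: "continuous_on UNIV (\<lambda>p::'a\<times>'a. fst p + snd p)" using assms(1) unfolding tvs_axioms_def by blast
  have "continuous_on S ((\<lambda>p::'a\<times>'a. fst p + snd p) \<circ> (\<lambda>x. (f x, g x)))"
    by (rule continuous_on_compose[OF continuous_on_Pair[OF assms(2,3)] continuous_on_subset[OF c]]) auto
  then show ?thesis by (simp add: o_def)
qed

lemma tvs_scale_cont:
  fixes f :: "'b::topological_space \<Rightarrow> real" and g :: "'b \<Rightarrow> 'a::{real_vector,topological_space}"
  assumes "tvs_axioms TYPE('a)" "continuous_on S f" "continuous_on S g"
  shows "continuous_on S (\<lambda>x. f x *\<^sub>R g x)"
proof -
  have c: "continuous_on UNIV (\<lambda>p::real\<times>'a. fst p *\<^sub>R snd p)" using assms(1) unfolding tvs_axioms_def by blast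
  have "continuous_on S ((\<lambda>p::real\<times>'a. fst p *\<^sub>R snd p) \<circ> (\<lambda>x. (f x, g x)))"
    by (rule continuous_on_compose[OF continuous_on_Pair[OF assms(2,3)] continuous_on_subset[OF c]]) auto
  then show ?thesis by (simp add: o_def)
qed

lemma cont_vimage_open:
  assumes "continuous_on UNIV f" "open B"
  shows "open (f -` B)"
  using assms continuous_on_open_vimage[of UNIV f] by simp

theorem mainTheorem19:
  fixes M A :: "'a::{ordered_real_vector, t2_space, first_countable_topology} set"
    and \<pi> :: "'a \<Rightarrow> real"
  assumes tvs: "tvs_axioms TYPE('a)"
    and lc: "locally_convex TYPE('a)"
    and M_sub: "subspace M"
    and M_fin: "\<exists>B. finite B \<and> span B = M"
    and M_dim: "1 < dim M"
    and pi_lin: "linear_on_sub M \<pi>"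
    and A1: "\<exists>U\<in>M \<inter> pos_cone. \<pi> U = 1"
    and A2_closed: "closed A" and A2_zero: "0 \<in> A" and A2_proper: "A \<noteq> UNIV"
    and A2_mono: "\<forall>X\<in>A. \<forall>P\<in>pos_cone. X + P \<in> A"
    and A3_finite: "\<forall>X. adm_prices A M \<pi> X \<noteq> {} \<and> bdd_below (adm_prices A M \<pi> X)"
    and A3_cont: "continuous_on UNIV (rho A M \<pi>)"
    and int: "interior pos_cone \<inter> M \<noteq> {}"
  shows "\<forall>\<epsilon>>0. \<forall>X. lsc_at M (Reps A M \<pi> \<epsilon>) X"
proof (intro allI impI)
  fix \<epsilon> :: real and X :: 'a
  assume eps: "\<epsilon> > 0"
  obtain U0 where U0i: "U0 \<in> interior pos_cone" and U0M: "U0 \<in> M" using int by blast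
  obtain G where G: "open G" "U0 \<in> G" "G \<subseteq> pos_cone" using U0i by (meson interiorE)
  show "lsc_at M (Reps A M \<pi> \<epsilon>) X"
    unfolding lsc_at_def
  proof (intro allI impI)
    fix U assume "openin (top_of_set M) U \<and> Reps A M \<pi> \<epsilon> X \<inter> U \<noteq> {}"
    then obtain Ob Z where O: "open Ob" "U = M \<inter> Ob" and Z: "Z \<in> Reps A M \<pi> \<epsilon> X" "Z \<in> U"
      by (auto simp: openin_open)
    have ZM: "Z \<in> M" and ZA: "X + Z \<in> A" and Zlt: "\<pi> Z < rho A M \<pi> X + \<epsilon>" and ZO: "Z \<in> Ob"
      using Z O unfolding Reps_def by auto
    define \<eta> where "\<eta> = (rho A M \<pi> X + \<epsilon> - \<pi> Z) / 2"
    have eta: "\<eta> > 0" using Zlt by (simp add: \<eta>_def)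
    have hc: "continuous_on UNIV (\<lambda>t::real. Z + t *\<^sub>R U0)"
      by (intro tvs_add_cont[OF tvs] tvs_scale_cont[OF tvs] continuous_intros)
    have "open ((\<lambda>t::real. Z + t *\<^sub>R U0) -` Ob)" by (rule cont_vimage_open[OF hc O(1)])
    moreover have "0 \<in> (\<lambda>t::real. Z + t *\<^sub>R U0) -` Ob" using ZO by simp
    ultimately obtain r where r: "r > 0" "ball 0 r \<subseteq> (\<lambda>t::real. Z + t *\<^sub>R U0) -` Ob"
      by (meson openE)
    define \<delta> where "\<delta> = min (r/2) (\<eta> / (\<bar>\<pi> U0\<bar> + 1))"
    have dpos: "\<delta> > 0" using r eta by (simp add: \<delta>_def)
    have "\<delta> \<in> ball 0 r" using r dpos by (simp add: \<delta>_def)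
    hence ZdO: "Z + \<delta> *\<^sub>R U0 \<in> Ob" using r by blast
    have apos: "\<bar>\<pi> U0\<bar> + 1 > 0" by simp
    have dle: "\<delta> \<le> \<eta> / (\<bar>\<pi> U0\<bar> + 1)" by (simp add: \<delta>_def)
    have "\<delta> * (\<bar>\<pi> U0\<bar> + 1) \<le> \<eta> / (\<bar>\<pi> U0\<bar> + 1) * (\<bar>\<pi> U0\<bar> + 1)"
      by (rule mult_right_mono[OF dle]) (use apos in linarith)
    also have "\<dots> = \<eta>" using apos by simp
    finally have d1: "\<delta> * (\<bar>\<pi> U0\<bar> + 1) \<le> \<eta>" .
    have d2: "\<delta> * \<pi> U0 \<le> \<delta> * \<bar>\<pi> U0\<bar>"
      by (rule mult_left_mono) (use dpos in auto)
    have "\<delta> * \<bar>\<pi> U0\<bar> + \<delta> \<le> \<eta>" using d1 by (simp add: distrib_left)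
    hence dpi: "\<delta> * \<pi> U0 < \<eta>" using d2 dpos by linarith
    define Z' where "Z' = Z + \<delta> *\<^sub>R U0"
    have Z'M: "Z' \<in> M" unfolding Z'_def using ZM U0M M_sub by (simp add: subspace_add subspace_scale)
    have piZ': "\<pi> Z' = \<pi> Z + \<delta> * \<pi> U0"
      using pi_lin ZM U0M M_sub unfolding linear_on_sub_def Z'_def by (simp add: subspace_scale)
    define k where "k = (\<lambda>Y. (1/\<delta>) *\<^sub>R (Y + (\<delta> *\<^sub>R U0 - X)))"
    have kc: "continuous_on UNIV k" unfolding k_def
      by (intro tvs_add_cont[OF tvs] tvs_scale_cont[OF tvs] continuous_intros)
    define V where "V = k -` G \<inter> rho A M \<pi> -` {rho A M \<pi> X - \<eta> <..}"
    have "open V" unfolding V_def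
      by (intro open_Int cont_vimage_open[OF kc G(1)] cont_vimage_open[OF A3_cont]) simp
    moreover have "X \<in> V" using G(2) dpos eta unfolding V_def k_def by simp
    moreover have "\<forall>Y\<in>V. Reps A M \<pi> \<epsilon> Y \<inter> U \<noteq> {}"
    proof
      fix Y assume Y: "Y \<in> V"
      have "k Y \<ge> 0" using Y G(3) unfolding V_def pos_cone_def by auto
      hence "\<delta> *\<^sub>R k Y \<ge> 0" using dpos by (simp add: scaleR_nonneg_nonneg)
      moreover have "\<delta> *\<^sub>R k Y = Y + (\<delta> *\<^sub>R U0 - X)" unfolding k_def using dpos by simp
      ultimately have P: "Y + (\<delta> *\<^sub>R U0 - X) \<in> pos_cone" unfolding pos_cone_def by simp
      have eqY: "Y + Z' = (X + Z) + (Y + (\<delta> *\<^sub>R U0 - X))" unfolding Z'_def by (simp add: algebra_simps)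
      have YA: "Y + Z' \<in> A" unfolding eqY using A2_mono ZA P by blast
      have "rho A M \<pi> Y > rho A M \<pi> X - \<eta>" using Y unfolding V_def by simp
      moreover have "2 * \<eta> = rho A M \<pi> X + \<epsilon> - \<pi> Z" by (simp add: \<eta>_def)
      ultimately have "\<pi> Z' < rho A M \<pi> Y + \<epsilon>" using piZ' dpi by linarith
      hence "Z' \<in> Reps A M \<pi> \<epsilon> Y" using Z'M YA unfolding Reps_def by simp
      moreover have "Z' \<in> U" using Z'M ZdO O(2) unfolding Z'_def by simp
      ultimately show "Reps A M \<pi> \<epsilon> Y \<inter> U \<noteq> {}" by blast
    qed
    ultimately show "\<exists>V. open V \<and> X \<in> V \<and> (\<forall>Y\<in>V. Reps A M \<pi> \<epsilon> Y \<inter> U \<noteq> {})" by blast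
  qed
qed

end
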